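(* Let $\mathcal X$ be a finite abelian group, $\mathcal Z$ a finite set, $P_{XZ}$ a distribution on $\mathcal X\times\mathcal Z$ and $W_{XZ|X}(x,z|x'):=P_{XZ}(x-x',z)$. For any finite set $\mathcal M$, distribution $P_M$ on $\mathcal M$, distribution $Q_Z$ on $\mathcal Z$ and constant $c>0$, \[ P_{js}(P_M,W_{XZ|X})\ge\sum_{\substack{(m,x,z):\\ P_M(m)P_{XZ}(x,z)\le \frac{c}{|\mathcal X|}Q_Z(z)}}P_M(m)P_{XZ}(x,z)\;-\;c. \]
   Context: A code $\phi=(\mathsf e,\mathsf d)$ consists of $\mathsf e:\mathcal M\to\mathcal X$ and $\mathsf d:\mathcal X\times\mathcal Z\to\mathcal M$; $P_{js}[\phi|P_M,W]:=\sum_mP_M(m)W(\{y:\mathsf d(y)\ne m\}|\mathsf e(m))$, and $P_{js}(P_M,W):=\inf_\phi P_{js}[\phi|P_M,W]$. *)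

theory Defs
  imports Complex_Main
begin

definition is_dist :: "('a::finite \<Rightarrow> real) \<Rightarrow> bool" where
  "is_dist P \<longleftrightarrow> (\<forall>a. 0 \<le> P a) \<and> (\<Sum>a\<in>UNIV. P a) = 1"

text \<open>Error probability of the code (e, d) for source distribution PM over channel W,
  where W x y is the probability of output y given input x.\<close>
definition Pjs_code ::
  "('m::finite \<Rightarrow> real) \<Rightarrow> ('m \<Rightarrow> 'x) \<Rightarrow> ('y::finite \<Rightarrow> 'm) \<Rightarrow> ('x \<Rightarrow> 'y \<Rightarrow> real) \<Rightarrow> real" where
  "Pjs_code PM e d W = (\<Sum>m\<in>UNIV. PM m * (\<Sum>y\<in>{y. d y \<noteq> m}. W (e m) y))"

definition Pjs ::
  "('m::finite \<Rightarrow> real) \<Rightarrow> ('x \<Rightarrow> 'y::finite \<Rightarrow> real) \<Rightarrow> real" where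
  "Pjs PM W = (INF ed \<in> (UNIV :: (('m \<Rightarrow> 'x) \<times> ('y \<Rightarrow> 'm)) set). Pjs_code PM (fst ed) (snd ed) W)"

end

theory Submission
  imports Defs
begin

lemma code_bound:
  fixes PXZ :: "('x::{ab_group_add, finite} \<times> 'z::finite) \<Rightarrow> real"
    and PM :: "'m::finite \<Rightarrow> real"
    and QZ :: "'z \<Rightarrow> real"
    and c :: real and e :: "'m \<Rightarrow> 'x" and d :: "'x \<times> 'z \<Rightarrow> 'm"
  assumes "is_dist PXZ" and "is_dist PM" and "is_dist QZ" and "c > 0"
  shows "(\<Sum>(m, x, z) \<in> {(m, x, z). PM m * PXZ (x, z) \<le> c / real (card (UNIV :: 'x set)) * QZ z}.
                 PM m * PXZ (x, z)) - c \<le> Pjs_code PM e d (\<lambda>x' (x, z). PXZ (x - x', z))"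
proof -
  define K where "K = c / real (card (UNIV :: 'x set))"
  define S where "S = {(m, x, z). PM m * PXZ (x, z) \<le> K * QZ z}"
  define F where "F = (\<lambda>p::'m \<times> 'x \<times> 'z. if p \<in> S then PM (fst p) * PXZ (snd p) else 0)"
  define g where "g = (\<lambda>m (y::'x \<times> 'z). PM m * PXZ (fst y - e m, snd y))"
  have PMnn: "\<And>m. PM m \<ge> 0" and PXnn: "\<And>p. PXZ p \<ge> 0" and Qnn: "\<And>z. QZ z \<ge> 0"
    and Qs: "(\<Sum>z\<in>UNIV. QZ z) = 1"
    using assms unfolding is_dist_def by auto
  have Npos: "real (card (UNIV :: 'x set)) > 0" by (simp add: finite_UNIV_card_ge_0)
  have "K \<ge> 0" unfolding K_def using assms(4) by simp
  have "(\<Sum>(m, x, z) \<in> S. PM m * PXZ (x, z)) = (\<Sum>p\<in>UNIV. F p)"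
    unfolding F_def by (subst sum.If_cases) (auto simp: case_prod_beta intro!: sum.cong)
  also have "\<dots> = (\<Sum>m\<in>UNIV. \<Sum>y\<in>UNIV. F (m, y))"
    by (simp add: sum.cartesian_product UNIV_Times_UNIV[symmetric] del: UNIV_Times_UNIV)
  also have "\<dots> = (\<Sum>m\<in>UNIV. \<Sum>y\<in>UNIV. F (m, fst y - e m, snd y))"
  proof (rule sum.cong[OF refl])
    fix m
    show "(\<Sum>y\<in>UNIV. F (m, y)) = (\<Sum>y\<in>UNIV. F (m, fst y - e m, snd y))"
      by (rule sum.reindex_bij_witness[where i="\<lambda>y. (fst y - e m, snd y)" and j="\<lambda>y. (fst y + e m, snd y)"]) auto
  qed
  also have "\<dots> \<le> (\<Sum>m\<in>UNIV. \<Sum>y\<in>UNIV. (if d y \<noteq> m then g m y else 0) + (if d y = m then K * QZ (snd y) else 0))"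
  proof (intro sum_mono)
    fix m y
    show "F (m, fst y - e m, snd y) \<le> (if d y \<noteq> m then g m y else 0) + (if d y = m then K * QZ (snd y) else 0)"
      using PMnn[of m] PXnn[of "(fst y - e m, snd y)"] Qnn[of "snd y"] \<open>K \<ge> 0\<close>
      by (auto simp: F_def S_def g_def)
  qed
  also have "\<dots> = (\<Sum>m\<in>UNIV. \<Sum>y\<in>UNIV. (if d y \<noteq> m then g m y else 0)) + (\<Sum>m\<in>UNIV. \<Sum>y\<in>UNIV. (if d y = m then K * QZ (snd y) else 0))"
    by (simp add: sum.distrib)
  also have "(\<Sum>m\<in>UNIV. \<Sum>y\<in>UNIV. (if d y \<noteq> m then g m y else 0)) = Pjs_code PM e d (\<lambda>x' (x, z). PXZ (x - x', z))"
    unfolding Pjs_code_def g_def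
    by (intro sum.cong refl) (simp add: sum.If_cases sum_distrib_left case_prod_beta Int_def)
  also have "(\<Sum>m\<in>UNIV. \<Sum>y\<in>UNIV. (if d y = m then K * QZ (snd y) else 0)) = (\<Sum>y\<in>(UNIV::('x\<times>'z) set). K * QZ (snd y))"
    by (subst sum.swap) simp
  also have "\<dots> = c"
  proof -
    have "(\<Sum>y\<in>(UNIV::('x\<times>'z) set). K * QZ (snd y)) = (\<Sum>x\<in>(UNIV::'x set). \<Sum>z\<in>UNIV. K * QZ z)"
      unfolding sum.cartesian_product UNIV_Times_UNIV by (simp add: case_prod_beta)
    also have "\<dots> = real (card (UNIV :: 'x set)) * K"
      by (simp add: sum_distrib_left[symmetric] Qs)
    also have "\<dots> = c" using Npos by (simp add: K_def)
    finally show ?thesis .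
  qed
  finally show ?thesis unfolding S_def K_def by (simp add: case_prod_unfold)
qed

theorem mainTheorem7:
  fixes PXZ :: "('x::{ab_group_add, finite} \<times> 'z::finite) \<Rightarrow> real"
    and PM :: "'m::finite \<Rightarrow> real"
    and QZ :: "'z \<Rightarrow> real"
    and c :: real
  assumes "is_dist PXZ" and "is_dist PM" and "is_dist QZ" and "c > 0"
  shows "Pjs PM (\<lambda>x' (x, z). PXZ (x - x', z))
           \<ge> (\<Sum>(m, x, z) \<in> {(m, x, z). PM m * PXZ (x, z) \<le> c / real (card (UNIV :: 'x set)) * QZ z}.
                 PM m * PXZ (x, z)) - c"
  unfolding Pjs_def
  apply (rule cINF_greatest)
   apply simp
  subgoal for ed using code_bound[OF assms, of "fst ed" "snd ed"] by simp
  done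

end
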